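(* Assume $\delta=d$ and $\gamma\ge1$. Then for every $(z,w)\in A_f$, $$\lim_{n\to\infty}\frac{1}{n\gamma d^{n-1}}\log|Q_z^n(w)|=G_p(z).$$
   Context: Let $p(z)=z^d+O(z^{d-1})$ be a monic polynomial of degree $\delta=d\ge 2$, and let $q(z,w)=b(z)w^d+(\text{terms of lower degree in } w)$ be a polynomial with $\deg_w q=d$, where $b$ is a monic polynomial of degree $\gamma$. Let $f(z,w)=(p(z),q(z,w))$. Write $Q_z^n=q_{p^{n-1}(z)}\circ\cdots\circ q_{p(z)}\circ q_z$ with $q_z=q(z,\cdot)$, so $f^n(z,w)=(p^n(z),Q_z^n(w))$. Let $A_p=\{z: p^n(z)\to\infty\}$ and $G_p(z)=\lim_n d^{-n}\log^+|p^n(z)|$. Define $\alpha=\max\{(n_j-\gamma)/(d-m_j)\}$ over monomials $z^{n_j}w^{m_j}$ appearing in $q$ with nonzero coefficient and $m_j<d$, and $\alpha=-\infty$ if $q=b(z)w^d$. Let $W_R=\{(z,w):|z|>R,\ |w|>R|z|^\alpha\}$ (if $\alpha=-\infty$: $\{|z|>R,\ w\ne0\}$), fix $R>1$ large enough that $f(W_R)\subset W_R$ and $W_R\subset A_p\times\mathbb{C}$, and set $A_f=\bigcup_{n\ge0}f^{-n}(W_R)$. *)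

theory Defs
  imports "HOL-Analysis.Analysis" "HOL-Computational_Algebra.Polynomial"
begin

text \<open>The two-variable polynomial q(z,w) is represented as a polynomial in w whose
coefficients are polynomials in z: q :: complex poly poly, with
q(z,w) = sum_m (coeff q m)(z) w^m.\<close>

definition qeval :: "complex poly poly \<Rightarrow> complex \<Rightarrow> complex \<Rightarrow> complex" where
  "qeval q z w = (\<Sum>m\<le>degree q. poly (coeff q m) z * w ^ m)"

definition skew :: "complex poly \<Rightarrow> complex poly poly \<Rightarrow> complex \<times> complex \<Rightarrow> complex \<times> complex" where
  "skew p q zw = (poly p (fst zw), qeval q (fst zw) (snd zw))"

fun Qit :: "complex poly \<Rightarrow> complex poly poly \<Rightarrow> nat \<Rightarrow> complex \<Rightarrow> complex \<Rightarrow> complex" where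
  "Qit p q 0 z w = w"
| "Qit p q (Suc n) z w = Qit p q n (poly p z) (qeval q z w)"

definition escape_set :: "complex poly \<Rightarrow> complex set" where
  "escape_set p = {z. filterlim (\<lambda>n. norm (((poly p) ^^ n) z)) at_top sequentially}"

definition green :: "complex poly \<Rightarrow> complex \<Rightarrow> real" where
  "green p z = lim (\<lambda>n. max 0 (ln (norm (((poly p) ^^ n) z))) / real (degree p) ^ n)"

definition low_monos :: "complex poly poly \<Rightarrow> (nat \<times> nat) set" where
  "low_monos q = {(n, m). m < degree q \<and> coeff (coeff q m) n \<noteq> 0}"

text \<open>alpha = max (n_j - gamma)/(d - m_j) (only meaningful when low_monos q is nonempty).\<close>
definition alpha :: "complex poly poly \<Rightarrow> real" where
  "alpha q = Max ((\<lambda>(n, m). (real n - real (degree (lead_coeff q))) / (real (degree q) - real m))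
                   ` low_monos q)"

definition W_set :: "complex poly poly \<Rightarrow> real \<Rightarrow> (complex \<times> complex) set" where
  "W_set q R = (if low_monos q = {}
      then {(z, w). R < norm z \<and> w \<noteq> 0}
      else {(z, w). R < norm z \<and> R * norm z powr alpha q < norm w})"

definition A_f :: "complex poly \<Rightarrow> complex poly poly \<Rightarrow> real \<Rightarrow> (complex \<times> complex) set" where
  "A_f p q R = (\<Union>n. ((skew p q) ^^ n) -` W_set q R)"

end

theory Submission
  imports Defs "HOL-Computational_Algebra.Fundamental_Theorem_Algebra"
begin


definition Fz :: "(nat \<Rightarrow> nat \<Rightarrow> complex) \<Rightarrow> (nat \<Rightarrow> nat \<Rightarrow> nat) \<Rightarrow> nat \<Rightarrow> nat \<Rightarrow> complex \<Rightarrow> complex \<Rightarrow> complex" where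
  "Fz cf k d Dz \<omega> t = (\<Sum>m\<le>d. \<Sum>n\<le>Dz. cf m n * \<omega>^m * t^(k n m))"

definition Sz :: "(nat \<Rightarrow> nat \<Rightarrow> complex) \<Rightarrow> nat \<Rightarrow> nat \<Rightarrow> real" where
  "Sz cf d Dz = (\<Sum>m\<le>d. \<Sum>n\<le>Dz. norm (cf m n))"

lemma Sz_nonneg: "Sz cf d Dz \<ge> 0"
  unfolding Sz_def by (intro sum_nonneg) auto

lemma pow_diff_le: "norm (t::complex) \<le> 1 \<Longrightarrow> norm (t^k - 0^k) \<le> norm t"
  by (cases k) (auto simp: norm_mult norm_power intro!: mult_left_le power_le_one)

lemma Fz_diff:
  assumes "norm t \<le> 1" "norm \<omega> \<ge> 1"
  shows "norm (Fz cf k d Dz \<omega> t - Fz cf k d Dz \<omega> 0) \<le> norm t * Sz cf d Dz * norm \<omega> ^ d"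
proof -
  have "Fz cf k d Dz \<omega> t - Fz cf k d Dz \<omega> 0 = (\<Sum>m\<le>d. \<Sum>n\<le>Dz. cf m n * \<omega>^m * (t^(k n m) - 0^(k n m)))"
    unfolding Fz_def by (simp add: sum_subtractf algebra_simps)
  also have "norm \<dots> \<le> (\<Sum>m\<le>d. \<Sum>n\<le>Dz. norm (cf m n) * (norm t * norm \<omega> ^ d))"
  proof (intro sum_norm_le)
    fix m n assume m: "m \<in> {..d}" and n: "n \<in> {..Dz}"
    have "norm \<omega> ^ m \<le> norm \<omega> ^ d" using m assms(2) by (intro power_increasing) auto
    moreover have "norm (t^(k n m) - 0^(k n m)) \<le> norm t" by (rule pow_diff_le[OF assms(1)])
    ultimately have "norm \<omega> ^ m * norm (t^(k n m) - 0^(k n m)) \<le> norm \<omega> ^ d * norm t"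
      by (intro mult_mono) auto
    then have "norm (cf m n) * (norm \<omega> ^ m * norm (t^(k n m) - 0^(k n m))) \<le> norm (cf m n) * (norm \<omega> ^ d * norm t)"
      by (rule mult_left_mono) simp
    then show "norm (cf m n * \<omega>^m * (t^(k n m) - 0^(k n m))) \<le> norm (cf m n) * (norm t * norm \<omega> ^ d)"
      by (simp add: norm_mult norm_power mult_ac)
  qed
  also have "\<dots> = norm t * Sz cf d Dz * norm \<omega> ^ d"
    unfolding Sz_def by (simp add: sum_distrib_right sum_distrib_left mult_ac)
  finally show ?thesis .
qed

lemma Fz_up:
  assumes "norm t \<le> 1" "norm \<omega> \<ge> 1"
  shows "norm (Fz cf k d Dz \<omega> t) \<le> Sz cf d Dz * norm \<omega> ^ d"
proof -
  have "norm (Fz cf k d Dz \<omega> t) \<le> (\<Sum>m\<le>d. \<Sum>n\<le>Dz. norm (cf m n) * norm \<omega> ^ d)"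
    unfolding Fz_def
  proof (intro sum_norm_le)
    fix m n assume m: "m \<in> {..d}" and n: "n \<in> {..Dz}"
    have "norm \<omega> ^ m \<le> norm \<omega> ^ d" using m assms(2) by (intro power_increasing) auto
    moreover have "norm t ^ (k n m) \<le> 1" using assms(1) by (intro power_le_one) auto
    ultimately have "norm \<omega> ^ m * norm t ^ (k n m) \<le> norm \<omega> ^ d * 1"
      by (intro mult_mono) auto
    then have "norm (cf m n) * (norm \<omega> ^ m * norm t ^ (k n m)) \<le> norm (cf m n) * (norm \<omega> ^ d * 1)"
      by (rule mult_left_mono) simp
    then show "norm (cf m n * \<omega>^m * t^(k n m)) \<le> norm (cf m n) * norm \<omega> ^ d"
      by (simp add: norm_mult norm_power mult_ac)
  qed
  also have "\<dots> = Sz cf d Dz * norm \<omega> ^ d"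
    unfolding Sz_def by (simp add: sum_distrib_right)
  finally show ?thesis .
qed

lemma Fz_zero:
  assumes d: "d \<ge> 1" and g: "\<gamma> \<le> Dz" and lead: "cf d \<gamma> = 1" "k \<gamma> d = 0"
    and oth: "\<And>n. n \<le> Dz \<Longrightarrow> n \<noteq> \<gamma> \<Longrightarrow> cf d n = 0 \<or> k n d > 0"
    and w: "norm \<omega> \<ge> 1"
  shows "norm (Fz cf k d Dz \<omega> 0 - \<omega>^d) \<le> Sz cf d Dz * norm \<omega> ^ (d - 1)"
proof -
  have top: "(\<Sum>n\<le>Dz. cf d n * \<omega>^d * 0^(k n d)) = \<omega>^d"
  proof -
    have "(\<Sum>n\<le>Dz. cf d n * \<omega>^d * 0^(k n d)) = (\<Sum>n\<le>Dz. if n = \<gamma> then \<omega>^d else 0)"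
    proof (rule sum.cong[OF refl])
      fix n assume "n \<in> {..Dz}"
      then show "cf d n * \<omega>^d * 0^(k n d) = (if n = \<gamma> then \<omega>^d else 0)"
        using oth[of n] lead by auto
    qed
    also have "\<dots> = \<omega>^d" using g by (simp add: sum.delta)
    finally show ?thesis .
  qed
  have "Fz cf k d Dz \<omega> 0 = (\<Sum>m<d. \<Sum>n\<le>Dz. cf m n * \<omega>^m * 0^(k n m)) + \<omega>^d"
    unfolding Fz_def using top by (simp add: lessThan_Suc_atMost[symmetric])
  then have e: "Fz cf k d Dz \<omega> 0 - \<omega>^d = (\<Sum>m<d. \<Sum>n\<le>Dz. cf m n * \<omega>^m * 0^(k n m))" by simp
  have "norm (\<Sum>m<d. \<Sum>n\<le>Dz. cf m n * \<omega>^m * 0^(k n m)) \<le> (\<Sum>m<d. \<Sum>n\<le>Dz. norm (cf m n) * norm \<omega> ^ (d - 1))"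
  proof (intro sum_norm_le)
    fix m n assume m: "m \<in> {..<d}" and n: "n \<in> {..Dz}"
    have "norm \<omega> ^ m \<le> norm \<omega> ^ (d - 1)" using m w by (intro power_increasing) auto
    moreover have "norm ((0::complex) ^ (k n m)) \<le> 1" by (simp add: power_0_left)
    ultimately have "norm \<omega> ^ m * norm ((0::complex) ^ (k n m)) \<le> norm \<omega> ^ (d - 1) * 1"
      by (intro mult_mono) auto
    then have "norm (cf m n) * (norm \<omega> ^ m * norm ((0::complex) ^ (k n m))) \<le> norm (cf m n) * (norm \<omega> ^ (d - 1) * 1)"
      by (rule mult_left_mono) simp
    then show "norm (cf m n * \<omega>^m * 0^(k n m)) \<le> norm (cf m n) * norm \<omega> ^ (d - 1)"
      by (simp add: norm_mult norm_power mult_ac)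
  qed
  also have "\<dots> \<le> (\<Sum>m\<le>d. \<Sum>n\<le>Dz. norm (cf m n) * norm \<omega> ^ (d - 1))"
    by (intro sum_mono2) (auto intro!: sum_nonneg)
  also have "\<dots> = Sz cf d Dz * norm \<omega> ^ (d - 1)"
    unfolding Sz_def by (simp add: sum_distrib_right)
  finally show ?thesis using e by simp
qed

definition Fpoly :: "(nat \<Rightarrow> nat \<Rightarrow> complex) \<Rightarrow> (nat \<Rightarrow> nat \<Rightarrow> nat) \<Rightarrow> nat \<Rightarrow> nat \<Rightarrow> complex \<Rightarrow> complex poly" where
  "Fpoly cf k d Dz \<omega> = (\<Sum>m\<le>d. \<Sum>n\<le>Dz. monom (cf m n * \<omega>^m) (k n m))"

lemma poly_Fpoly: "poly (Fpoly cf k d Dz \<omega>) t = Fz cf k d Dz \<omega> t"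
  unfolding Fpoly_def Fz_def by (simp add: poly_sum poly_monom)

lemma coeff_Fpoly: "coeff (Fpoly cf k d Dz \<omega>) j = (\<Sum>m\<le>d. \<Sum>n\<le>Dz. cf m n * \<omega>^m * (if k n m = j then 1 else 0))"
  unfolding Fpoly_def by (auto simp: coeff_sum intro!: sum.cong)

lemma degree_Fpoly: "degree (Fpoly cf k d Dz \<omega>) \<le> (\<Sum>m\<le>d. \<Sum>n\<le>Dz. k n m)"
proof (rule degree_le, intro allI impI)
  fix j assume j: "(\<Sum>m\<le>d. \<Sum>n\<le>Dz. k n m) < j"
  have "k n m \<noteq> j" if "m \<le> d" "n \<le> Dz" for m n
  proof -
    have "k n m \<le> (\<Sum>n\<le>Dz. k n m)" using that by (intro member_le_sum) auto
    also have "\<dots> \<le> (\<Sum>m\<le>d. \<Sum>n\<le>Dz. k n m)"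
      using that by (intro member_le_sum[of m "{..d}" "\<lambda>m. \<Sum>n\<le>Dz. k n m"]) auto
    finally show ?thesis using j by auto
  qed
  then show "coeff (Fpoly cf k d Dz \<omega>) j = 0" unfolding coeff_Fpoly by (auto intro!: sum.neutral)
qed

definition P0poly :: "(nat \<Rightarrow> nat \<Rightarrow> complex) \<Rightarrow> (nat \<Rightarrow> nat \<Rightarrow> nat) \<Rightarrow> nat \<Rightarrow> nat \<Rightarrow> complex poly" where
  "P0poly cf k d Dz = (\<Sum>m\<le>d. \<Sum>n\<le>Dz. monom (cf m n * 0^(k n m)) m)"

lemma poly_P0poly: "poly (P0poly cf k d Dz) \<omega> = Fz cf k d Dz \<omega> 0"
  unfolding P0poly_def Fz_def by (simp add: poly_sum poly_monom mult_ac)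

lemma coeff_lin_mult: "coeff ([:1, c:] * (Q::complex poly)) j = coeff Q j + (if j = 0 then 0 else c * coeff Q (j - 1))"
  by (cases j) (simp_all add: mult_pCons_left coeff_pCons)

lemma coeff_prod_bound:
  fixes M :: "complex multiset"
  assumes "\<forall>r\<in>#M. \<rho> \<le> norm r" "\<rho> > 0"
  shows "norm (coeff (\<Prod>r\<in>#M. [:1, -1/r:]) j) \<le> real (size M choose j) / \<rho>^j"
  using assms(1)
proof (induction M arbitrary: j)
  case empty
  then show ?case by (cases j) auto
next
  case (add r M)
  have r: "\<rho> \<le> norm r" using add.prems by auto
  have IH: "\<And>j. norm (coeff (\<Prod>r\<in>#M. [:1, -1/r:]) j) \<le> real (size M choose j) / \<rho>^j"
    using add by auto
  let ?Q = "\<Prod>r\<in>#M. [:1, -1/r:]"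
  show ?case
  proof (cases j)
    case 0
    then show ?thesis using IH[of 0] by (simp add: coeff_lin_mult)
  next
    case (Suc i)
    have "norm (coeff (\<Prod>r\<in>#add_mset r M. [:1, -1/r:]) j) = norm (coeff ?Q j + (-1/r) * coeff ?Q i)"
      using Suc by (simp add: coeff_lin_mult)
    also have "\<dots> \<le> norm (coeff ?Q j) + norm ((-1/r) * coeff ?Q i)"
      by (rule norm_triangle_ineq)
    also have "norm ((-1/r) * coeff ?Q i) = norm (1/r) * norm (coeff ?Q i)"
      by (simp add: norm_mult norm_divide)
    also have "norm (1/r) * norm (coeff ?Q i) \<le> (1/\<rho>) * (real (size M choose i) / \<rho>^i)"
    proof (rule mult_mono)
      show "norm (1/r) \<le> 1/\<rho>" using r assms(2) by (simp add: norm_divide frac_le)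
    qed (use IH[of i] assms(2) in auto)
    also have "(1/\<rho>) * (real (size M choose i) / \<rho>^i) = real (size M choose i) / \<rho>^j"
      using Suc by simp
    finally have "norm (coeff (\<Prod>r\<in>#add_mset r M. [:1, -1/r:]) j) \<le>
       real (size M choose j) / \<rho>^j + real (size M choose i) / \<rho>^j"
      using IH[of j] by linarith
    also have "\<dots> = real (size (add_mset r M) choose j) / \<rho>^j"
      using Suc by (simp add: add_divide_distrib)
    finally show ?thesis .
  qed
qed

lemma coeff0_prod: "coeff (\<Prod>x\<in>#(M::complex multiset). [:1, -1/x:]) 0 = 1"
  by (induction M) (auto simp: coeff_lin_mult)

lemma root_coeff_bound:
  fixes P :: "complex poly"
  assumes "\<rho> > 0" "\<And>t. norm t < \<rho> \<Longrightarrow> poly P t \<noteq> 0"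
  shows "norm (coeff P j) \<le> 2 ^ degree P * norm (coeff P 0) / \<rho>^j"
proof -
  have P0: "P \<noteq> 0" using assms(2)[of 0] assms(1) by auto
  let ?M = "proots P"
  have rts: "\<forall>r\<in>#?M. \<rho> \<le> norm r"
    using assms P0 by (auto simp: not_less[symmetric])
  have nz: "\<forall>r\<in>#?M. r \<noteq> 0" using rts assms(1) by auto
  have lin: "\<And>M::complex multiset. \<forall>r\<in>#M. r \<noteq> 0 \<Longrightarrow>
     (\<Prod>y\<in>#M. [:-y, 1:]) = smult (\<Prod>y\<in>#M. -y) (\<Prod>y\<in>#M. [:1, -1/y:])"
  proof -
    fix M :: "complex multiset"
    show "\<forall>r\<in>#M. r \<noteq> 0 \<Longrightarrow> (\<Prod>y\<in>#M. [:-y, 1:]) = smult (\<Prod>y\<in>#M. -y) (\<Prod>y\<in>#M. [:1, -1/y:])"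
    proof (induction M)
      case (add a M)
      have e: "[:-a, 1:] = smult (-a) [:1, -1/a:]" using add.prems by (simp add: field_simps)
      have "(\<Prod>y\<in>#add_mset a M. [:-y, 1:]) = [:-a, 1:] * (\<Prod>y\<in>#M. [:-y, 1:])" by simp
      also have "\<dots> = smult (-a) [:1, -1/a:] * smult (\<Prod>y\<in>#M. -y) (\<Prod>y\<in>#M. [:1, -1/y:])"
        using add e by simp
      also have "\<dots> = smult ((-a) * (\<Prod>y\<in>#M. -y)) ([:1, -1/a:] * (\<Prod>y\<in>#M. [:1, -1/y:]))"
        by (simp only: mult_smult_left mult_smult_right smult_smult mult.commute[of "\<Prod>y\<in>#M. -y"])
      also have "\<dots> = smult (\<Prod>y\<in>#add_mset a M. -y) (\<Prod>y\<in>#add_mset a M. [:1, -1/y:])"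
        by (simp only: prod_mset.add_mset image_mset_add_mset)
      finally show ?case .
    qed simp
  qed
  have "(\<Prod>x\<in>#?M. [:-x, 1:]) = smult (\<Prod>x\<in>#?M. -x) (\<Prod>x\<in>#?M. [:1, -1/x:])"
    using lin nz by blast
  then have "P = smult (lead_coeff P * (\<Prod>x\<in>#?M. -x)) (\<Prod>x\<in>#?M. [:1, -1/x:])"
    using complex_poly_decompose_multiset[of P] by simp
  then obtain \<kappa> Q where PQ: "P = smult \<kappa> Q" and Q: "Q = (\<Prod>x\<in>#?M. [:1, -1/x:])" by blast
  have Q0: "coeff Q 0 = 1" unfolding Q by (rule coeff0_prod)
  have "norm (coeff Q j) \<le> real (size ?M choose j) / \<rho>^j"
    unfolding Q by (rule coeff_prod_bound[OF rts assms(1)])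
  also have "\<dots> \<le> 2 ^ degree P / \<rho>^j"
    using binomial_le_pow2[of "size ?M" j] assms(1)
    by (intro divide_right_mono) (auto simp: size_proots_complex simp flip: of_nat_le_iff)
  finally have "norm \<kappa> * norm (coeff Q j) \<le> norm \<kappa> * (2 ^ degree P / \<rho>^j)"
    by (intro mult_left_mono) auto
  then show ?thesis using PQ Q0 by (auto simp: norm_mult mult_ac)
qed

lemma Fz_cont_seq:
  assumes "X \<longlonglongrightarrow> \<omega>"
  shows "(\<lambda>j. Fz cf k d Dz (X j) t) \<longlonglongrightarrow> Fz cf k d Dz \<omega> t"
  unfolding Fz_def by (intro tendsto_intros assms)

lemma coeff_Fpoly_seq:
  assumes "X \<longlonglongrightarrow> \<omega>"
  shows "(\<lambda>j. coeff (Fpoly cf k d Dz (X j)) i) \<longlonglongrightarrow> coeff (Fpoly cf k d Dz \<omega>) i"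
  unfolding coeff_Fpoly by (intro tendsto_intros assms)

lemma approach_seq:
  fixes \<omega>0 :: complex
  assumes "\<omega>0 \<noteq> 0" and fin: "finite Z0"
  shows "\<exists>X. X \<longlonglongrightarrow> \<omega>0 \<and> (\<forall>j. norm (X j) > norm \<omega>0 \<and> X j \<notin> Z0)"
proof -
  define f where "f s = \<omega>0 * (1 + complex_of_real s)" for s
  have inj: "inj_on f A" for A
    using assms(1) by (auto simp: inj_on_def f_def)
  have nf: "norm (f s) = norm \<omega>0 * (1 + s)" if "s > 0" for s
  proof -
    have "1 + complex_of_real s = complex_of_real (1 + s)" by simp
    then have "norm (1 + complex_of_real s) = 1 + s" using that by (simp only: norm_of_real)
    then show ?thesis by (simp add: f_def norm_mult)
  qed
  have "\<exists>s. 0 < s \<and> s < inverse (real (Suc j)) \<and> f s \<notin> Z0" for j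
  proof (rule ccontr)
    assume "\<not> ?thesis"
    then have "f ` {0<..<inverse (real (Suc j))} \<subseteq> Z0" by auto
    then have "finite (f ` {0<..<inverse (real (Suc j))})" using fin by (rule finite_subset)
    then have "finite {0<..<inverse (real (Suc j))}" using inj by (rule finite_imageD)
    then show False using infinite_Ioo[of 0 "inverse (real (Suc j))"] by simp
  qed
  then obtain sf where sf: "\<And>j. 0 < sf j \<and> sf j < inverse (real (Suc j)) \<and> f (sf j) \<notin> Z0"
    by metis
  have "sf \<longlonglongrightarrow> 0"
  proof (rule real_tendsto_sandwich[OF _ _ tendsto_const LIMSEQ_inverse_real_of_nat])
    show "\<forall>\<^sub>F j in sequentially. 0 \<le> sf j" using sf by (auto intro: always_eventually less_imp_le)
    show "\<forall>\<^sub>F j in sequentially. sf j \<le> inverse (real (Suc j))" using sf by (auto intro: always_eventually less_imp_le)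
  qed
  then have "(\<lambda>j. f (sf j)) \<longlonglongrightarrow> \<omega>0 * (1 + complex_of_real 0)"
    unfolding f_def by (intro tendsto_intros)
  then have lim: "(\<lambda>j. f (sf j)) \<longlonglongrightarrow> \<omega>0" by simp
  have "norm (f (sf j)) > norm \<omega>0" for j
    using nf[of "sf j"] sf[of j] assms(1) by simp
  then show ?thesis using lim sf by blast
qed

lemma Fz_BL:
  assumes R: "R > 0" and \<rho>: "\<rho> > 0"
    and H: "\<And>t. 0 < norm t \<Longrightarrow> norm t < \<rho> \<Longrightarrow> \<exists>e>0. \<forall>\<omega>. R < norm \<omega> \<longrightarrow> e \<le> norm (Fz cf k d Dz \<omega> t)"
    and P0nz: "P0poly cf k d Dz \<noteq> 0"
    and w0: "norm \<omega>0 \<ge> R"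
  shows "Fz cf k d Dz \<omega>0 0 \<noteq> 0"
proof
  assume F0: "Fz cf k d Dz \<omega>0 0 = 0"
  let ?F = "Fz cf k d Dz"
  have nz0: "\<omega>0 \<noteq> 0" using w0 R by auto
  have i: "?F \<omega>0 t \<noteq> 0" if t: "0 < norm t" "norm t < \<rho>" for t
  proof
    assume Ft: "?F \<omega>0 t = 0"
    obtain e where e: "e > 0" "\<And>\<omega>. R < norm \<omega> \<Longrightarrow> e \<le> norm (?F \<omega> t)" using H[OF t] by blast
    obtain X where X: "X \<longlonglongrightarrow> \<omega>0" "\<And>j. norm (X j) > norm \<omega>0"
      using approach_seq[OF nz0, of "{}"] by auto
    have XRj: "R < norm (X j)" for j using X(2)[of j] w0 by linarith
    have "(\<lambda>j. norm (?F (X j) t)) \<longlonglongrightarrow> norm (?F \<omega>0 t)"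
      by (intro tendsto_norm Fz_cont_seq X(1))
    moreover have "\<exists>N. \<forall>j\<ge>N. e \<le> norm (?F (X j) t)"
      using e(2) XRj by blast
    ultimately have "e \<le> norm (?F \<omega>0 t)" by (rule LIMSEQ_le_const)
    then show False using Ft e(1) by simp
  qed
  define t1 where "t1 = complex_of_real (\<rho> / 2)"
  have "?F \<omega>0 t1 \<noteq> 0" using \<rho> by (intro i) (auto simp: t1_def)
  then have "Fpoly cf k d Dz \<omega>0 \<noteq> 0" by (metis poly_Fpoly poly_0)
  then obtain j0 where j0: "coeff (Fpoly cf k d Dz \<omega>0) j0 \<noteq> 0"
    by (metis leading_coeff_neq_0)
  define Km where "Km = (\<Sum>m\<le>d. \<Sum>n\<le>Dz. k n m)"
  define M where "M = 2 ^ Km / \<rho> ^ j0"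
  have iii: "norm (coeff (Fpoly cf k d Dz \<omega>) j0) \<le> M * norm (?F \<omega> 0)"
    if w: "R < norm \<omega>" and nz: "?F \<omega> 0 \<noteq> 0" for \<omega>
  proof -
    have np: "poly (Fpoly cf k d Dz \<omega>) t \<noteq> 0" if tr: "norm t < \<rho>" for t
    proof (cases "t = 0")
      case True then show ?thesis using nz by (simp add: poly_Fpoly)
    next
      case False
      then obtain e where "e > 0" "e \<le> norm (?F \<omega> t)" using H[of t] tr w by auto
      then show ?thesis by (auto simp: poly_Fpoly)
    qed
    have "norm (coeff (Fpoly cf k d Dz \<omega>) j0) \<le> 2 ^ degree (Fpoly cf k d Dz \<omega>) * norm (coeff (Fpoly cf k d Dz \<omega>) 0) / \<rho> ^ j0"
      by (rule root_coeff_bound[OF \<rho> np])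
    also have "coeff (Fpoly cf k d Dz \<omega>) 0 = ?F \<omega> 0" by (simp add: poly_0_coeff_0[symmetric] poly_Fpoly)
    also have "2 ^ degree (Fpoly cf k d Dz \<omega>) * norm (?F \<omega> 0) / \<rho> ^ j0 \<le> 2 ^ Km * norm (?F \<omega> 0) / \<rho> ^ j0"
      using \<rho> degree_Fpoly[of cf k d Dz \<omega>] unfolding Km_def
      by (intro divide_right_mono mult_right_mono power_increasing) auto
    finally show ?thesis by (simp add: M_def)
  qed
  have fin: "finite {\<omega>. poly (P0poly cf k d Dz) \<omega> = 0}" by (rule poly_roots_finite[OF P0nz])
  obtain X where X: "X \<longlonglongrightarrow> \<omega>0" "\<And>j. norm (X j) > norm \<omega>0"
    "\<And>j. X j \<notin> {\<omega>. poly (P0poly cf k d Dz) \<omega> = 0}"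
    using approach_seq[OF nz0 fin] by auto
  have Xnz: "?F (X j) 0 \<noteq> 0" for j using X(3)[of j] by (simp add: poly_P0poly)
  have XR: "R < norm (X j)" for j using X(2)[of j] w0 by linarith
  have l1: "(\<lambda>j. norm (coeff (Fpoly cf k d Dz (X j)) j0)) \<longlonglongrightarrow> norm (coeff (Fpoly cf k d Dz \<omega>0) j0)"
    by (intro tendsto_norm coeff_Fpoly_seq X(1))
  have l2: "(\<lambda>j. M * norm (?F (X j) 0)) \<longlonglongrightarrow> M * norm (?F \<omega>0 0)"
    by (intro tendsto_intros Fz_cont_seq X(1))
  have "norm (coeff (Fpoly cf k d Dz \<omega>0) j0) \<le> M * norm (?F \<omega>0 0)"
    using l1 l2 by (rule LIMSEQ_le) (use iii XR Xnz in auto)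
  then show False using F0 j0 by simp
qed


lemma alg2:
  fixes X S m :: real
  assumes "X \<noteq> 0" "S + 1 \<noteq> 0"
  shows "m / (2 * (S + 1) * X) * S * X = m * S / (2 * (S + 1))"
proof -
  have "m / (2 * (S + 1) * X) * S * X = (m * S) * X / ((2 * (S + 1)) * X)" by simp
  also have "\<dots> = m * S / (2 * (S + 1))" using assms(1) by (rule mult_divide_mult_cancel_right)
  finally show ?thesis .
qed

lemma Fz_LB:
  assumes d: "d \<ge> 1" and g: "\<gamma> \<le> Dz" and lead: "cf d \<gamma> = 1" "k \<gamma> d = 0"
    and oth: "\<And>n. n \<le> Dz \<Longrightarrow> n \<noteq> \<gamma> \<Longrightarrow> cf d n = 0 \<or> k n d > 0"
    and R: "R \<ge> 1"
    and BL: "\<And>\<omega>. R \<le> norm \<omega> \<Longrightarrow> Fz cf k d Dz \<omega> 0 \<noteq> 0"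
  shows "\<exists>c0>0. \<exists>T>0. T \<le> 1 \<and> (\<forall>\<omega> t. R \<le> norm \<omega> \<longrightarrow> norm t \<le> T \<longrightarrow> c0 * norm \<omega> ^ d \<le> norm (Fz cf k d Dz \<omega> t))"
proof -
  let ?F = "Fz cf k d Dz"
  define S where "S = Sz cf d Dz"
  have S0: "S \<ge> 0" unfolding S_def by (rule Sz_nonneg)
  define K1 where "K1 = max R (4 * S + 1)"
  have K1: "K1 \<ge> 1" "K1 \<ge> R" "K1 \<ge> 4 * S + 1" using R by (auto simp: K1_def)
  define Ann where "Ann = cball (0::complex) K1 - ball 0 R"
  have cA: "compact Ann" unfolding Ann_def by (intro compact_diff compact_cball open_ball)
  have neA: "complex_of_real R \<in> Ann" using R K1 by (auto simp: Ann_def)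
  have coA: "continuous_on Ann (\<lambda>\<omega>. norm (?F \<omega> 0))"
    unfolding Fz_def by (intro continuous_intros)
  obtain \<omega>m where \<omega>m: "\<omega>m \<in> Ann" "\<And>\<omega>. \<omega> \<in> Ann \<Longrightarrow> norm (?F \<omega>m 0) \<le> norm (?F \<omega> 0)"
    using continuous_attains_inf[OF cA _ coA] neA by blast
  define m0 where "m0 = norm (?F \<omega>m 0)"
  have m0: "m0 > 0" using BL[of \<omega>m] \<omega>m(1) by (auto simp: m0_def Ann_def)
  define T where "T = min 1 (min (1 / (4 * S + 1)) (m0 / (2 * (S + 1) * K1 ^ d)))"
  define c0 where "c0 = min (1/2) (m0 / (2 * K1 ^ d))"
  have K1d: "K1 ^ d \<ge> 1" using K1 by simp
  have Tpos: "T > 0" using m0 S0 K1d by (simp add: T_def)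
  have c0pos: "c0 > 0" using m0 K1d by (simp add: c0_def)
  have T1: "T \<le> 1" by (simp add: T_def)
  have TS: "T * S \<le> 1 / 4"
  proof -
    have "T * S \<le> (1 / (4 * S + 1)) * S" using S0 by (intro mult_right_mono) (auto simp: T_def)
    also have "\<dots> \<le> 1 / 4" using S0 by (simp add: field_simps)
    finally show ?thesis .
  qed
  have TSK: "T * S * K1 ^ d \<le> m0 / 2"
  proof -
    have "T * S * K1 ^ d \<le> (m0 / (2 * (S + 1) * K1 ^ d)) * S * K1 ^ d"
      using S0 K1d by (intro mult_right_mono) (auto simp: T_def)
    also have "\<dots> = m0 * S / (2 * (S + 1))"
    proof -
      have a: "K1 ^ d \<noteq> 0" using K1d by linarith
      have b: "S + 1 \<noteq> 0" using S0 by auto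
      show ?thesis using alg2[OF a b] .
    qed
    also have "\<dots> \<le> m0 / 2" using S0 m0 by (simp add: field_simps)
    finally show ?thesis .
  qed
  have main: "c0 * norm \<omega> ^ d \<le> norm (?F \<omega> t)" if w: "R \<le> norm \<omega>" and t: "norm t \<le> T" for \<omega> t
  proof -
    have w1: "norm \<omega> \<ge> 1" using w R by simp
    have t1: "norm t \<le> 1" using t T1 by simp
    have dif: "norm (?F \<omega> t - ?F \<omega> 0) \<le> norm t * S * norm \<omega> ^ d"
      unfolding S_def by (rule Fz_diff[OF t1 w1])
    have dif2: "norm t * S * norm \<omega> ^ d \<le> T * S * norm \<omega> ^ d"
      using t S0 by (intro mult_right_mono) auto
    have tri: "norm (?F \<omega> 0) - norm (?F \<omega> t - ?F \<omega> 0) \<le> norm (?F \<omega> t)"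
      using norm_triangle_ineq2[of "?F \<omega> 0" "?F \<omega> t"] by (simp add: norm_minus_commute)
    show ?thesis
    proof (cases "norm \<omega> \<le> K1")
      case True
      then have "\<omega> \<in> Ann" using w by (auto simp: Ann_def)
      then have mm: "m0 \<le> norm (?F \<omega> 0)" using \<omega>m(2) by (simp add: m0_def)
      have wK: "norm \<omega> ^ d \<le> K1 ^ d" using True by (intro power_mono) auto
      have "T * S * norm \<omega> ^ d \<le> T * S * K1 ^ d"
        using wK Tpos S0 by (intro mult_left_mono) auto
      then have "m0 / 2 \<le> norm (?F \<omega> t)" using TSK mm dif dif2 tri by linarith
      moreover have "c0 * norm \<omega> ^ d \<le> (m0 / (2 * K1 ^ d)) * K1 ^ d"
        using wK c0pos by (intro mult_mono) (auto simp: c0_def)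
      moreover have "(m0 / (2 * K1 ^ d)) * K1 ^ d = m0 / 2" using K1(1) by simp
      ultimately show ?thesis by linarith
    next
      case False
      then have wbig: "norm \<omega> \<ge> 4 * S + 1" using K1 by linarith
      have z: "norm (?F \<omega> 0 - \<omega>^d) \<le> S * norm \<omega> ^ (d - 1)"
        unfolding S_def by (rule Fz_zero[of d \<gamma> Dz cf k, OF d g lead oth w1])
      have pw: "norm \<omega> ^ d = norm \<omega> * norm \<omega> ^ (d - 1)"
        using d by (cases d) auto
      have "S * norm \<omega> ^ (d - 1) \<le> (norm \<omega> / 4) * norm \<omega> ^ (d - 1)"
        using wbig by (intro mult_right_mono) auto
      also have "\<dots> = norm \<omega> ^ d / 4" using pw by simp
      finally have sz: "S * norm \<omega> ^ (d - 1) \<le> norm \<omega> ^ d / 4" .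
      have "norm (\<omega>^d) - norm (?F \<omega> 0 - \<omega>^d) \<le> norm (?F \<omega> 0)"
        using norm_triangle_ineq2[of "\<omega>^d" "?F \<omega> 0"] by (simp add: norm_minus_commute)
      then have f0: "norm \<omega> ^ d - norm \<omega> ^ d / 4 \<le> norm (?F \<omega> 0)" using z sz by (simp add: norm_power)
      have "T * S * norm \<omega> ^ d \<le> norm \<omega> ^ d / 4"
      proof -
        have "T * S * norm \<omega> ^ d \<le> (1/4) * norm \<omega> ^ d" using TS by (intro mult_right_mono) auto
        then show ?thesis by simp
      qed
      then have "norm \<omega> ^ d / 2 \<le> norm (?F \<omega> t)" using f0 dif dif2 tri by linarith
      moreover have "c0 * norm \<omega> ^ d \<le> (1/2) * norm \<omega> ^ d"
        by (intro mult_right_mono) (auto simp: c0_def)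
      ultimately show ?thesis by linarith
    qed
  qed
  show ?thesis using c0pos Tpos T1 main by blast
qed



lemma powi_split:
  fixes x :: real
  assumes "x > 0"
  shows "x powi (int B * int g + A * int d) = (x ^ B) ^ g * (x powi A) ^ d"
proof -
  have "x powi (int B * int g + A * int d) = x powi (int B * int g) * x powi (A * int d)"
    using assms by (intro power_int_add) auto
  also have "x powi (int B * int g) = (x ^ B) ^ g"
    by (simp flip: of_nat_mult add: power_mult)
  also have "x powi (A * int d) = (x powi A) ^ d"
    by (simp add: power_int_mult)
  finally show ?thesis .
qed

lemma term_id:
  fixes \<zeta> \<omega> :: complex
  assumes z: "\<zeta> \<noteq> 0" and kk: "kk \<ge> 0" and E: "E0 - kk = int B * int n + A * int m"
  shows "(\<zeta>^B)^n * (\<omega> * \<zeta> powi A)^m = \<zeta> powi E0 * (\<omega>^m * (1/\<zeta>)^(nat kk))"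
proof -
  have a: "(1/\<zeta>)^(nat kk) = \<zeta> powi (- kk)"
  proof -
    have "(1/\<zeta>)^(nat kk) = inverse (\<zeta> ^ nat kk)" by (simp add: power_inverse divide_inverse)
    also have "\<zeta> ^ nat kk = \<zeta> powi kk" using kk by (metis power_int_of_nat int_nat_eq)
    finally show ?thesis by (simp add: power_int_minus)
  qed
  have b: "\<zeta> powi E0 * \<zeta> powi (- kk) = \<zeta> powi (int B * int n + A * int m)"
    using z E by (simp flip: power_int_add)
  have c: "\<zeta> powi (int B * int n + A * int m) = (\<zeta>^B)^n * (\<zeta> powi A)^m"
  proof -
    have "\<zeta> powi (int B * int n + A * int m) = \<zeta> powi (int B * int n) * \<zeta> powi (A * int m)"
      using z by (intro power_int_add) auto
    also have "\<zeta> powi (int B * int n) = (\<zeta> ^ B) ^ n"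
      by (simp flip: of_nat_mult add: power_mult)
    also have "\<zeta> powi (A * int m) = (\<zeta> powi A) ^ m"
      by (simp add: power_int_mult)
    finally show ?thesis .
  qed
  show ?thesis using a b c by (simp add: power_mult_distrib mult_ac)
qed

lemma monic_asym:
  fixes b :: "complex poly"
  assumes "lead_coeff b = 1"
  shows "\<exists>R0\<ge>1. \<forall>x. norm x \<ge> R0 \<longrightarrow> norm (poly b x - x ^ degree b) \<le> norm x ^ degree b / 2"
proof (cases "degree b = 0")
  case True
  then have "b = [:1:]" using assms by (metis degree_eq_zeroE lead_coeff_pCons(1) pCons_0_0 coeff_pCons_0 one_poly_eq_simps(1))
  then show ?thesis by (intro exI[of _ 1]) auto
next
  case False
  define g where "g = degree b"
  define S where "S = (\<Sum>i<g. norm (coeff b i))"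
  have S0: "S \<ge> 0" unfolding S_def by (intro sum_nonneg) auto
  show ?thesis
  proof (intro exI[of _ "max 1 (2 * S)"] conjI allI impI)
    fix x :: complex assume x: "max 1 (2 * S) \<le> norm x"
    have "poly b x = (\<Sum>i\<le>g. coeff b i * x ^ i)" by (simp add: poly_altdef g_def)
    also have "\<dots> = (\<Sum>i<g. coeff b i * x ^ i) + x ^ g"
      using assms by (simp add: lessThan_Suc_atMost[symmetric] g_def)
    finally have e: "poly b x - x ^ g = (\<Sum>i<g. coeff b i * x ^ i)" by simp
    have "norm (\<Sum>i<g. coeff b i * x ^ i) \<le> (\<Sum>i<g. norm (coeff b i) * norm x ^ (g - 1))"
    proof (rule sum_norm_le)
      fix i assume "i \<in> {..<g}"
      then have "norm x ^ i \<le> norm x ^ (g - 1)" using x by (intro power_increasing) auto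
      then show "norm (coeff b i * x ^ i) \<le> norm (coeff b i) * norm x ^ (g - 1)"
        by (simp add: norm_mult norm_power mult_left_mono)
    qed
    also have "\<dots> = S * norm x ^ (g - 1)" by (simp add: S_def sum_distrib_right)
    also have "\<dots> \<le> (norm x / 2) * norm x ^ (g - 1)"
      using x by (intro mult_right_mono) auto
    also have "\<dots> = norm x ^ g / 2"
      using False by (simp add: g_def power_eq_if)
    finally show "norm (poly b x - x ^ degree b) \<le> norm x ^ degree b / 2" using e by (simp add: g_def)
  qed auto
qed

lemma key_empty:
  fixes p :: "complex poly" and q :: "complex poly poly" and d :: nat and R :: real
  assumes "degree q = d"
    and "lead_coeff (lead_coeff q) = 1"
    and E: "low_monos q = {}"
  shows "\<exists>Z c C. c > 0 \<and> (\<forall>z w. (z, w) \<in> W_set q R \<and> norm z \<ge> Z \<longrightarrow> w \<noteq> 0 \<and>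
     c * norm z ^ degree (lead_coeff q) * norm w ^ d \<le> norm (qeval q z w) \<and>
     norm (qeval q z w) \<le> C * norm z ^ degree (lead_coeff q) * norm w ^ d)"
proof -
  define b where "b = lead_coeff q"
  define g where "g = degree b"
  have c0: "coeff q m = 0" if "m < d" for m
  proof (rule poly_eqI)
    fix n show "coeff (coeff q m) n = coeff 0 n"
      using E that assms(1) by (auto simp: low_monos_def)
  qed
  have qe: "qeval q z w = poly b z * w ^ d" for z w
  proof -
    have "qeval q z w = (\<Sum>m<d. poly (coeff q m) z * w ^ m) + poly (coeff q d) z * w ^ d"
      unfolding qeval_def assms(1) by (simp add: lessThan_Suc_atMost[symmetric])
    also have "(\<Sum>m<d. poly (coeff q m) z * w ^ m) = 0" using c0 by (auto intro!: sum.neutral)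
    finally show ?thesis using assms(1) by (simp add: b_def)
  qed
  obtain R0 where R0: "R0 \<ge> 1" "\<And>x. norm x \<ge> R0 \<Longrightarrow> norm (poly b x - x ^ g) \<le> norm x ^ g / 2"
    using monic_asym[of b] assms(2) unfolding b_def g_def by blast
  have main: "w \<noteq> 0 \<and> 1 / 2 * norm z ^ degree (lead_coeff q) * norm w ^ d \<le> norm (qeval q z w) \<and>
     norm (qeval q z w) \<le> 2 * norm z ^ degree (lead_coeff q) * norm w ^ d"
    if zw: "(z, w) \<in> W_set q R \<and> R0 \<le> norm z" for z w
  proof (intro conjI)
    have wnz: "w \<noteq> 0" using zw E by (auto simp: W_set_def)
    have h: "norm (poly b z - z ^ g) \<le> norm z ^ g / 2" using R0(2) zw by auto
    have lo: "norm z ^ g / 2 \<le> norm (poly b z)"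
      using h norm_triangle_ineq2[of "z ^ g" "poly b z"] by (simp add: norm_power norm_minus_commute)
    have t: "norm (poly b z) \<le> norm (poly b z - z ^ g) + norm z ^ g"
      using norm_triangle_ineq[of "poly b z - z ^ g" "z ^ g"] by (simp add: norm_power)
    have hi: "norm (poly b z) \<le> 2 * norm z ^ g"
      using h t zero_le_power[of "norm z" g] norm_ge_zero[of z] by linarith
    have nq: "norm (qeval q z w) = norm (poly b z) * norm w ^ d" by (simp add: qe norm_mult norm_power)
    show "w \<noteq> 0" by (rule wnz)
    show "1 / 2 * norm z ^ degree (lead_coeff q) * norm w ^ d \<le> norm (qeval q z w)"
      unfolding nq using lo by (intro mult_right_mono) (auto simp: g_def b_def)
    show "norm (qeval q z w) \<le> 2 * norm z ^ degree (lead_coeff q) * norm w ^ d"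
      unfolding nq using hi by (intro mult_right_mono) (auto simp: g_def b_def)
  qed
  show ?thesis by (rule exI[of _ R0], rule exI[of _ "1/2"], rule exI[of _ 2]) (use main in auto)
qed


lemma key_nonempty:
  fixes p :: "complex poly" and q :: "complex poly poly" and d :: nat and R :: real
  assumes dp: "degree p = d" and d2: "d \<ge> 2" and lp: "lead_coeff p = 1"
    and dq: "degree q = d"
    and lq: "lead_coeff (lead_coeff q) = 1"
    and R: "R > 1"
    and inv: "skew p q ` W_set q R \<subseteq> W_set q R"
    and NE: "low_monos q \<noteq> {}"
  shows "\<exists>Z c C. c > 0 \<and> (\<forall>z w. (z, w) \<in> W_set q R \<and> norm z \<ge> Z \<longrightarrow> w \<noteq> 0 \<and>
     c * norm z ^ degree (lead_coeff q) * norm w ^ d \<le> norm (qeval q z w) \<and>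
     norm (qeval q z w) \<le> C * norm z ^ degree (lead_coeff q) * norm w ^ d)"
proof -
  define \<gamma> where "\<gamma> = degree (lead_coeff q)"
  have lqd: "lead_coeff q = coeff q d" using dq by simp
  define cf where "cf m n = coeff (coeff q m) n" for m n
  define Dz where "Dz = Max ((\<lambda>m. degree (coeff q m)) ` {..d})"
  have degle: "degree (coeff q m) \<le> Dz" if "m \<le> d" for m
    unfolding Dz_def using that by (intro Max_ge) auto
  have cfz: "m \<le> d \<and> n \<le> Dz" if "cf m n \<noteq> 0" for m n
  proof -
    have "coeff q m \<noteq> 0" using that by (auto simp: cf_def)
    then have m: "m \<le> d" using dq le_degree by blast
    have "n \<le> degree (coeff q m)" using that le_degree by (auto simp: cf_def)
    then show ?thesis using degle[OF m] m by simp
  qed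
  have gD: "\<gamma> \<le> Dz" using degle[of d] lqd by (simp add: \<gamma>_def)
  define Lm where "Lm = low_monos q"
  have finL: "finite Lm"
  proof (rule finite_subset)
    show "Lm \<subseteq> {..Dz} \<times> {..<d}"
      using cfz by (auto simp: Lm_def low_monos_def dq cf_def)
  qed auto
  define gf where "gf = (\<lambda>(n::nat, m::nat). (real n - real \<gamma>) / (real d - real m))"
  define \<alpha> where "\<alpha> = alpha q"
  have alpha_eq: "\<alpha> = Max (gf ` Lm)"
    unfolding \<alpha>_def alpha_def gf_def Lm_def \<gamma>_def dq by simp
  have age: "gf nm \<le> \<alpha>" if "nm \<in> Lm" for nm
    unfolding alpha_eq using finL that by (intro Max_ge) auto
  have "\<alpha> \<in> gf ` Lm" unfolding alpha_eq using finL NE by (intro Max_in) (auto simp: Lm_def)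
  then obtain n0 m0 where nm0: "(n0, m0) \<in> Lm" "\<alpha> = gf (n0, m0)" by auto
  have m0d: "m0 < d" using nm0(1) by (auto simp: Lm_def low_monos_def dq)
  define B :: nat where "B = fact d"
  have B1: "B \<ge> 1" by (simp add: B_def)
  have dvd: "(d - m0) dvd fact d" using m0d by (intro dvd_fact) auto
  define A where "A = (int n0 - int \<gamma>) * int (fact d div (d - m0))"
  have A_eq: "real_of_int A = \<alpha> * real B"
  proof -
    have "real (fact d div (d - m0)) = real (fact d) / real (d - m0)"
      using dvd by (rule real_of_nat_div)
    moreover have "real (d - m0) = real d - real m0" using m0d by simp
    ultimately show ?thesis
      using nm0(2) by (simp add: A_def gf_def B_def)
  qed
  define kk where "kk n m = int B * (int \<gamma> - int n) + A * (int d - int m)" for n m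
  define k where "k n m = nat (kk n m)" for n m
  have kpos: "kk n m \<ge> 0" if "cf m n \<noteq> 0" for n m
  proof (cases "m < d")
    case True
    then have "(n, m) \<in> Lm" using that by (auto simp: Lm_def low_monos_def dq cf_def)
    then have "(real n - real \<gamma>) / (real d - real m) \<le> \<alpha>" using age by (auto simp: gf_def)
    then have "real n - real \<gamma> \<le> \<alpha> * (real d - real m)" using True by (simp add: pos_divide_le_eq)
    then have "real B * (real n - real \<gamma>) \<le> real B * (\<alpha> * (real d - real m))"
      by (intro mult_left_mono) auto
    then have "real_of_int (kk n m) \<ge> 0" unfolding kk_def using A_eq by (simp add: algebra_simps)
    then show ?thesis by simp
  next
    case False
    then have md: "m = d" using cfz[OF that] by simp
    have "n \<le> degree (coeff q d)" using that md le_degree by (auto simp: cf_def)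
    then have "n \<le> \<gamma>" using lqd by (simp add: \<gamma>_def)
    then show ?thesis by (simp add: kk_def md)
  qed
  have lead1: "cf d \<gamma> = 1" using lq lqd by (simp add: cf_def \<gamma>_def)
  have lead2: "k \<gamma> d = 0" by (simp add: k_def kk_def)
  have oth: "cf d n = 0 \<or> k n d > 0" if "n \<le> Dz" "n \<noteq> \<gamma>" for n
  proof (cases "cf d n = 0")
    case False
    then have "n \<le> degree (coeff q d)" using le_degree by (auto simp: cf_def)
    then have "n < \<gamma>" using lqd that(2) by (simp add: \<gamma>_def)
    then have "kk n d > 0" using B1 by (simp add: kk_def)
    then show ?thesis by (simp add: k_def)
  qed simp
  have d1: "d \<ge> 1" using d2 by simp
  let ?F = "Fz cf k d Dz"
  define E0 where "E0 = int B * int \<gamma> + A * int d"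
  have polyc: "poly (coeff q m) x = (\<Sum>n\<le>Dz. cf m n * x ^ n)" if "m \<le> d" for m x
  proof -
    have "poly (coeff q m) x = (\<Sum>n\<le>degree (coeff q m). cf m n * x ^ n)"
      by (simp add: poly_altdef cf_def)
    also have "\<dots> = (\<Sum>n\<le>Dz. cf m n * x ^ n)"
      using degle[OF that] by (intro sum.mono_neutral_left) (auto simp: cf_def coeff_eq_0)
    finally show ?thesis .
  qed
  have ID: "qeval q (\<zeta>^B) (\<omega> * \<zeta> powi A) = \<zeta> powi E0 * ?F \<omega> (1/\<zeta>)" if z: "\<zeta> \<noteq> 0" for \<zeta> \<omega> :: complex
  proof -
    have "qeval q (\<zeta>^B) (\<omega> * \<zeta> powi A) = (\<Sum>m\<le>d. \<Sum>n\<le>Dz. cf m n * ((\<zeta>^B)^n * (\<omega> * \<zeta> powi A)^m))"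
      unfolding qeval_def dq by (auto simp: polyc sum_distrib_left sum_distrib_right mult_ac intro!: sum.cong)
    also have "\<dots> = (\<Sum>m\<le>d. \<Sum>n\<le>Dz. \<zeta> powi E0 * (cf m n * \<omega>^m * (1/\<zeta>)^(k n m)))"
    proof (intro sum.cong refl)
      fix m n
      show "cf m n * ((\<zeta>^B)^n * (\<omega> * \<zeta> powi A)^m) = \<zeta> powi E0 * (cf m n * \<omega>^m * (1/\<zeta>)^(k n m))"
      proof (cases "cf m n = 0")
        case False
        have "E0 - kk n m = int B * int n + A * int m" by (simp add: E0_def kk_def algebra_simps)
        from term_id[OF z kpos[OF False] this, of \<omega>]
        show ?thesis by (simp add: k_def mult_ac)
      qed simp
    qed
    also have "\<dots> = \<zeta> powi E0 * ?F \<omega> (1/\<zeta>)"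
      unfolding Fz_def by (simp add: sum_distrib_left)
    finally show ?thesis .
  qed
  have Wne: "W_set q R = {(z, w). R < norm z \<and> R * norm z powr \<alpha> < norm w}"
    using NE by (simp add: W_set_def \<alpha>_def)
  have WT: "(\<zeta>^B, \<omega> * \<zeta> powi A) \<in> W_set q R \<longleftrightarrow> R < norm \<zeta> ^ B \<and> R < norm \<omega>" if z: "\<zeta> \<noteq> 0" for \<zeta> \<omega> :: complex
  proof -
    have zp: "norm \<zeta> > 0" using z by simp
    have "norm (\<zeta>^B) powr \<alpha> = (norm \<zeta> powr real B) powr \<alpha>" using zp by (simp add: norm_power powr_realpow)
    also have "\<dots> = norm \<zeta> powr (real_of_int A)" using A_eq by (simp add: powr_powr mult_ac)
    also have "\<dots> = norm \<zeta> powi A" using zp by (intro powr_real_of_int') auto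
    finally have e1: "norm (\<zeta>^B) powr \<alpha> = norm \<zeta> powi A" .
    have e2: "norm (\<omega> * \<zeta> powi A) = norm \<omega> * norm \<zeta> powi A" by (simp add: norm_mult norm_power_int)
    have pp: "norm \<zeta> powi A > 0" using zp by simp
    show ?thesis unfolding Wne using e1 e2 pp by (simp add: norm_power)
  qed
  define \<rho> where "\<rho> = 1 / R"
  have \<rho>: "\<rho> > 0" using R by (simp add: \<rho>_def)
  have H: "\<exists>e>0. \<forall>\<omega>. R < norm \<omega> \<longrightarrow> e \<le> norm (?F \<omega> t)" if t: "0 < norm t" "norm t < \<rho>" for t
  proof -
    define \<zeta> where "\<zeta> = 1 / t"
    have tz: "t = 1 / \<zeta>" by (simp add: \<zeta>_def)
    have znz: "\<zeta> \<noteq> 0" using t by (auto simp: \<zeta>_def)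
    have zR: "norm \<zeta> > R" using t R by (simp add: \<zeta>_def \<rho>_def norm_divide field_simps)
    have "norm \<zeta> ^ 1 \<le> norm \<zeta> ^ B" using zR R B1 by (intro power_increasing) auto
    then have zB: "R < norm \<zeta> ^ B" using zR by simp
    define z where "z = \<zeta> ^ B"
    have pz: "R < norm (poly p z)"
    proof -
      have "(z, complex_of_real (R + 1) * \<zeta> powi A) \<in> W_set q R"
        using WT[OF znz, of "complex_of_real (R + 1)"] zB R by (simp add: z_def)
      then have "skew p q (z, complex_of_real (R + 1) * \<zeta> powi A) \<in> W_set q R" using inv by auto
      then show ?thesis by (simp add: skew_def Wne)
    qed
    define e where "e = R * norm (poly p z) powr \<alpha> / norm (\<zeta> powi E0)"
    have "poly p z \<noteq> 0" using pz R by auto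
    then have ea: "norm (poly p z) powr \<alpha> > 0" by simp
    have eb: "norm (\<zeta> powi E0) > 0" using znz by (simp add: norm_power_int)
    have epos: "e > 0" unfolding e_def using ea eb R by (intro divide_pos_pos mult_pos_pos) auto
    have "e \<le> norm (?F \<omega> t)" if w: "R < norm \<omega>" for \<omega>
    proof -
      have "(z, \<omega> * \<zeta> powi A) \<in> W_set q R" using WT[OF znz, of \<omega>] zB w by (simp add: z_def)
      then have "skew p q (z, \<omega> * \<zeta> powi A) \<in> W_set q R" using inv by auto
      then have "R * norm (poly p z) powr \<alpha> < norm (qeval q z (\<omega> * \<zeta> powi A))"
        by (simp add: skew_def Wne)
      also have "norm (qeval q z (\<omega> * \<zeta> powi A)) = norm (\<zeta> powi E0) * norm (?F \<omega> t)"
        unfolding z_def ID[OF znz] tz by (simp add: norm_mult)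
      finally have "R * norm (poly p z) powr \<alpha> < norm (\<zeta> powi E0) * norm (?F \<omega> t)" .
      moreover have "norm (\<zeta> powi E0) > 0" using znz by simp
      ultimately show ?thesis unfolding e_def by (simp add: divide_le_eq mult_ac)
    qed
    then show ?thesis using epos by blast
  qed
  define S where "S = Sz cf d Dz"
  have S0: "S \<ge> 0" unfolding S_def by (rule Sz_nonneg)
  have P0nz: "P0poly cf k d Dz \<noteq> 0"
  proof
    assume P0: "P0poly cf k d Dz = 0"
    define \<omega>1 where "\<omega>1 = complex_of_real (S + 2)"
    have n1: "norm \<omega>1 = S + 2" using S0 by (simp add: \<omega>1_def)
    have w1: "norm \<omega>1 \<ge> 1" using n1 S0 by simp
    have "?F \<omega>1 0 = 0" using P0 poly_P0poly[of cf k d Dz \<omega>1] by simp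
    moreover have "norm (?F \<omega>1 0 - \<omega>1^d) \<le> S * norm \<omega>1 ^ (d - 1)"
      unfolding S_def by (rule Fz_zero[of d \<gamma> Dz cf k, OF d1 gD lead1 lead2 oth w1])
    ultimately have le: "norm \<omega>1 ^ d \<le> S * norm \<omega>1 ^ (d - 1)" by (simp add: norm_power)
    have pw: "norm \<omega>1 ^ d = norm \<omega>1 * norm \<omega>1 ^ (d - 1)" using d1 by (cases d) auto
    have "S * norm \<omega>1 ^ (d - 1) < norm \<omega>1 * norm \<omega>1 ^ (d - 1)"
      using n1 w1 by (intro mult_strict_right_mono) auto
    then show False using le pw by simp
  qed
  have BL: "?F \<omega> 0 \<noteq> 0" if "R \<le> norm \<omega>" for \<omega>
    using Fz_BL[OF _ \<rho> H P0nz that] R by auto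
  obtain c0 T where c0: "c0 > 0" and T: "T > 0" "T \<le> 1"
    and LB: "\<And>\<omega> t. R \<le> norm \<omega> \<Longrightarrow> norm t \<le> T \<Longrightarrow> c0 * norm \<omega> ^ d \<le> norm (?F \<omega> t)"
    using Fz_LB[of d \<gamma> Dz cf k R, OF d1 gD lead1 lead2 oth _ BL] R by auto
  define Z where "Z = max (R + 1) ((1 / T) ^ B)"
  have main: "w \<noteq> 0 \<and> c0 * norm z ^ \<gamma> * norm w ^ d \<le> norm (qeval q z w) \<and>
     norm (qeval q z w) \<le> S * norm z ^ \<gamma> * norm w ^ d"
    if zw: "(z, w) \<in> W_set q R" and zZ: "norm z \<ge> Z" for z w
  proof -
    have znz: "z \<noteq> 0" using zZ R by (auto simp: Z_def)
    obtain \<zeta> where zeta: "z = \<zeta> ^ B" using exists_complex_root[of B z] B1 by auto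
    have \<zeta>nz: "\<zeta> \<noteq> 0" using znz zeta B1 by auto
    define \<omega> where "\<omega> = w / \<zeta> powi A"
    have wo: "w = \<omega> * \<zeta> powi A" using \<zeta>nz by (simp add: \<omega>_def)
    have Ro: "R < norm \<omega>" using WT[OF \<zeta>nz, of \<omega>] zw by (simp add: zeta wo)
    have "(1 / T) ^ B \<le> norm \<zeta> ^ B" using zZ by (simp add: Z_def zeta norm_power)
    then have "(1 / T) ^ Suc (B - 1) \<le> norm \<zeta> ^ Suc (B - 1)" using B1 by simp
    then have zT: "1 / T \<le> norm \<zeta>" by (rule power_le_imp_le_base) simp
    have tT: "norm (1 / \<zeta>) \<le> T" using zT T(1) \<zeta>nz by (simp add: norm_divide field_simps)
    have t1: "norm (1 / \<zeta>) \<le> 1" using tT T(2) by simp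
    have o1: "norm \<omega> \<ge> 1" using Ro R by simp
    have lo: "c0 * norm \<omega> ^ d \<le> norm (?F \<omega> (1 / \<zeta>))" using LB[OF _ tT] Ro by simp
    have hi: "norm (?F \<omega> (1 / \<zeta>)) \<le> S * norm \<omega> ^ d" unfolding S_def by (rule Fz_up[OF t1 o1])
    have nq: "norm (qeval q z w) = norm \<zeta> powi E0 * norm (?F \<omega> (1 / \<zeta>))"
      by (simp add: zeta wo ID[OF \<zeta>nz] norm_mult norm_power_int)
    have nzw: "norm z ^ \<gamma> * norm w ^ d = norm \<zeta> powi E0 * norm \<omega> ^ d"
    proof -
      have "norm \<zeta> powi E0 = (norm \<zeta> ^ B) ^ \<gamma> * (norm \<zeta> powi A) ^ d"
        unfolding E0_def using \<zeta>nz by (intro powi_split) auto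
      then show ?thesis by (simp add: zeta wo norm_mult norm_power norm_power_int power_mult_distrib mult_ac)
    qed
    have X: "norm \<zeta> powi E0 > 0" using \<zeta>nz by simp
    have wnz: "w \<noteq> 0" using Ro R wo \<zeta>nz by auto
    have "c0 * (norm z ^ \<gamma> * norm w ^ d) \<le> norm (qeval q z w)"
      unfolding nzw nq using lo X by (simp add: mult_left_mono mult.left_commute)
    moreover have "norm (qeval q z w) \<le> S * (norm z ^ \<gamma> * norm w ^ d)"
      unfolding nzw nq using hi X by (simp add: mult_left_mono mult.left_commute)
    ultimately show ?thesis using wnz by (simp add: mult_ac)
  qed
  show ?thesis unfolding \<gamma>_def[symmetric]
    by (rule exI[of _ Z], rule exI[of _ c0], rule exI[of _ S]) (use main c0 in auto)
qed



lemma geo_conv: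
  fixes a :: "nat \<Rightarrow> real"
  assumes r: "0 \<le> r" "r < 1" and M: "0 \<le> M" and h: "\<And>n. n \<ge> N \<Longrightarrow> \<bar>a (Suc n) - a n\<bar> \<le> M * r^n"
  shows "\<exists>G. a \<longlonglongrightarrow> G \<and> (\<forall>n\<ge>N. \<bar>a n - G\<bar> \<le> M * r^n / (1 - r))"
proof -
  define \<delta> where "\<delta> i = (if N \<le> i then a (Suc i) - a i else 0)" for i
  have db: "norm (\<delta> i) \<le> M * r^i" for i
    using h[of i] M r by (auto simp: \<delta>_def)
  have sg: "summable (\<lambda>i. M * r^i)"
    using r by (intro summable_mult summable_geometric) auto
  have sd: "summable \<delta>" by (rule summable_comparison_test[OF _ sg]) (intro exI[of _ 0] allI impI db)
  have rep: "a (N + k) = a N + (\<Sum>i<N + k. \<delta> i)" for k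
  proof (induction k)
    case 0
    have "(\<Sum>i<N. \<delta> i) = 0" by (auto simp: \<delta>_def)
    then show ?case by simp
  next
    case (Suc k)
    then show ?case by (simp add: \<delta>_def)
  qed
  have rep': "a n = a N + (\<Sum>i<n. \<delta> i)" if "n \<ge> N" for n
    using rep[of "n - N"] that by simp
  define G where "G = a N + suminf \<delta>"
  have "(\<lambda>n. a N + (\<Sum>i<n. \<delta> i)) \<longlonglongrightarrow> G"
    unfolding G_def by (intro tendsto_add tendsto_const summable_LIMSEQ sd)
  then have conv: "a \<longlonglongrightarrow> G"
  proof (rule Lim_transform_eventually)
    show "\<forall>\<^sub>F n in sequentially. a N + (\<Sum>i<n. \<delta> i) = a n"
      unfolding eventually_sequentially by (intro exI[of _ N] allI impI) (rule rep'[symmetric])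
  qed
  have tail: "\<bar>a n - G\<bar> \<le> M * r^n / (1 - r)" if "n \<ge> N" for n
  proof -
    have "G - a n = suminf \<delta> - (\<Sum>i<n. \<delta> i)" using rep'[OF that] by (simp add: G_def)
    also have "\<dots> = (\<Sum>i. \<delta> (i + n))" using suminf_split_initial_segment[OF sd, of n] by simp
    finally have e: "G - a n = (\<Sum>i. \<delta> (i + n))" .
    have sg2: "summable (\<lambda>i. M * r^n * r^i)"
      using r by (intro summable_mult summable_geometric) auto
    have "norm (\<Sum>i. \<delta> (i + n)) \<le> (\<Sum>i. M * r^n * r^i)"
    proof (rule norm_suminf_le[OF _ sg2])
      fix i show "norm (\<delta> (i + n)) \<le> M * r^n * r^i"
        using db[of "i+n"] by (simp add: power_add mult_ac)
    qed
    also have "(\<Sum>i. M * r^n * r^i) = M * r^n * (1 / (1 - r))"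
      using r by (subst suminf_mult) (auto simp: suminf_geometric)
    finally show ?thesis using e by (simp add: abs_minus_commute)
  qed
  show ?thesis using conv tail by blast
qed

lemma monic_ln_bound:
  fixes b :: "complex poly"
  assumes "lead_coeff b = 1"
  shows "\<exists>R0\<ge>1. \<forall>x. norm x \<ge> R0 \<longrightarrow> poly b x \<noteq> 0 \<and>
      \<bar>ln (norm (poly b x)) - real (degree b) * ln (norm x)\<bar> \<le> ln 2"
proof -
  obtain R0 where R0: "R0 \<ge> 1" "\<And>x. norm x \<ge> R0 \<Longrightarrow> norm (poly b x - x ^ degree b) \<le> norm x ^ degree b / 2"
    using monic_asym[OF assms] by blast
  show ?thesis
  proof (intro exI[of _ R0] conjI allI impI R0(1))
    fix x :: complex assume x: "norm x \<ge> R0"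
    let ?g = "degree b"
    have xp: "norm x > 0" using x R0 by auto
    have h: "norm (poly b x - x ^ ?g) \<le> norm x ^ ?g / 2" using R0(2)[OF x] .
    have lo: "norm x ^ ?g / 2 \<le> norm (poly b x)"
      using h norm_triangle_ineq2[of "x ^ ?g" "poly b x"] by (simp add: norm_power norm_minus_commute)
    have t: "norm (poly b x) \<le> norm (poly b x - x ^ ?g) + norm x ^ ?g"
      using norm_triangle_ineq[of "poly b x - x ^ ?g" "x ^ ?g"] by (simp add: norm_power)
    have hi: "norm (poly b x) \<le> 2 * norm x ^ ?g"
      using h t zero_le_power[of "norm x" ?g] norm_ge_zero[of x] by linarith
    have pos: "norm x ^ ?g > 0" using xp by simp
    then have pb: "norm (poly b x) > 0" using lo by linarith
    then show "poly b x \<noteq> 0" by auto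
    have lnx: "ln (norm x ^ ?g) = real ?g * ln (norm x)" using xp by (simp add: ln_realpow)
    have "ln (norm x ^ ?g / 2) \<le> ln (norm (poly b x))" using lo pos by (subst ln_le_cancel_iff) auto
    moreover have "ln (norm (poly b x)) \<le> ln (2 * norm x ^ ?g)" using hi pb pos by (subst ln_le_cancel_iff) auto
    moreover have "ln (norm x ^ ?g / 2) = ln (norm x ^ ?g) - ln 2" by (rule ln_divide_pos) (use pos in auto)
    moreover have "ln (2 * norm x ^ ?g) = ln 2 + ln (norm x ^ ?g)" by (rule ln_mult_pos) (use pos in auto)
    ultimately show "\<bar>ln (norm (poly b x)) - real ?g * ln (norm x)\<bar> \<le> ln 2"
      using lnx by linarith
  qed
qed

lemma alg_id:
  fixes D g k P X G :: real
  assumes "D > 0" "g > 0" "k > 0" "P > 0"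
  shows "D / g * (X / (D * P) - k * g * G / D) * inverse k + G = X / (k * g * P)"
  using assms by (simp add: field_simps)

lemma skew_iter: "(skew p q ^^ n) (z, w) = ((poly p ^^ n) z, Qit p q n z w)"
proof (induction n arbitrary: z w)
  case 0 then show ?case by simp
next
  case (Suc n)
  have "(skew p q ^^ Suc n) (z, w) = (skew p q ^^ n) (skew p q (z, w))"
    by (simp only: funpow_Suc_right o_apply)
  also have "\<dots> = (skew p q ^^ n) (poly p z, qeval q z w)" by (simp add: skew_def)
  also have "\<dots> = ((poly p ^^ n) (poly p z), Qit p q n (poly p z) (qeval q z w))" by (rule Suc.IH)
  also have "(poly p ^^ n) (poly p z) = (poly p ^^ Suc n) z" by (simp only: funpow_Suc_right o_apply)
  finally show ?case by simp
qed

lemma Qit_Suc': "Qit p q (Suc n) z w = qeval q ((poly p ^^ n) z) (Qit p q n z w)"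
proof -
  have "Qit p q (Suc n) z w = snd ((skew p q ^^ Suc n) (z, w))" by (simp only: skew_iter snd_conv)
  also have "\<dots> = snd (skew p q ((skew p q ^^ n) (z, w)))" by (simp only: funpow.simps o_apply)
  also have "\<dots> = qeval q ((poly p ^^ n) z) (Qit p q n z w)" by (simp only: skew_iter skew_def fst_conv snd_conv)
  finally show ?thesis .
qed

lemma key_estimate:
  fixes p :: "complex poly" and q :: "complex poly poly" and d :: nat and R :: real
  assumes "degree p = d" and "d \<ge> 2" and "lead_coeff p = 1"
    and "degree q = d"
    and "lead_coeff (lead_coeff q) = 1"
    and "R > 1"
    and "skew p q ` W_set q R \<subseteq> W_set q R"
  shows "\<exists>Z c C. c > 0 \<and> (\<forall>z w. (z, w) \<in> W_set q R \<and> norm z \<ge> Z \<longrightarrow> w \<noteq> 0 \<and>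
     c * norm z ^ degree (lead_coeff q) * norm w ^ d \<le> norm (qeval q z w) \<and>
     norm (qeval q z w) \<le> C * norm z ^ degree (lead_coeff q) * norm w ^ d)"
proof (cases "low_monos q = {}")
  case True
  show ?thesis by (rule key_empty[OF assms(4,5) True])
next
  case False
  show ?thesis by (rule key_nonempty[OF assms(1-7) False])
qed

theorem theorem6p10:
  fixes p :: "complex poly" and q :: "complex poly poly" and d :: nat and R :: real
  assumes "degree p = d" and "d \<ge> 2" and "lead_coeff p = 1"
    and "degree q = d"
    and "lead_coeff (lead_coeff q) = 1"
    and "degree (lead_coeff q) \<ge> 1"
    and "R > 1"
    and "skew p q ` W_set q R \<subseteq> W_set q R"
    and "W_set q R \<subseteq> escape_set p \<times> UNIV"
    and "(z, w) \<in> A_f p q R"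
  shows "(\<lambda>n. ln (norm (Qit p q n z w)) / (real n * real (degree (lead_coeff q)) * real d ^ (n - 1)))
           \<longlonglongrightarrow> green p z"
proof -
  define \<gamma> where "\<gamma> = degree (lead_coeff q)"
  define zn where "zn n = (poly p ^^ n) z" for n
  define wn where "wn n = Qit p q n z w" for n
  have d2: "real d \<ge> 2" using assms(2) by simp
  have dpos: "real d > 0" using d2 by simp
  have r1: "0 \<le> 1 / real d" by simp
  have r2: "1 / real d < 1" using d2 by simp
  have gpos: "real \<gamma> > 0" using assms(6) by (simp add: \<gamma>_def)
  obtain Z c C where c: "c > 0" and KE: "\<And>z w. (z, w) \<in> W_set q R \<Longrightarrow> norm z \<ge> Z \<Longrightarrow> w \<noteq> 0 \<and>
     c * norm z ^ \<gamma> * norm w ^ d \<le> norm (qeval q z w) \<and>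
     norm (qeval q z w) \<le> C * norm z ^ \<gamma> * norm w ^ d"
  proof -
    from key_estimate[OF assms(1-5,7,8)] obtain Z c C where "c > 0" and
      "\<forall>z w. (z, w) \<in> W_set q R \<and> norm z \<ge> Z \<longrightarrow> w \<noteq> 0 \<and>
     c * norm z ^ \<gamma> * norm w ^ d \<le> norm (qeval q z w) \<and>
     norm (qeval q z w) \<le> C * norm z ^ \<gamma> * norm w ^ d" unfolding \<gamma>_def by auto
    then show ?thesis by (intro that[of c Z C]) auto
  qed
  obtain R0 where R0: "R0 \<ge> 1" and pb: "\<And>x. norm x \<ge> R0 \<Longrightarrow> poly p x \<noteq> 0 \<and>
      \<bar>ln (norm (poly p x)) - real d * ln (norm x)\<bar> \<le> ln 2"
  proof -
    from monic_ln_bound[OF assms(3)] obtain R0 where "R0 \<ge> 1" and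
      "\<forall>x. norm x \<ge> R0 \<longrightarrow> poly p x \<noteq> 0 \<and>
      \<bar>ln (norm (poly p x)) - real (degree p) * ln (norm x)\<bar> \<le> ln 2" by auto
    then show ?thesis using that assms(1) by auto
  qed
  obtain N where N: "(skew p q ^^ N) (z, w) \<in> W_set q R"
    using assms(10) unfolding A_f_def by auto
  have inW: "(zn n, wn n) \<in> W_set q R" if "n \<ge> N" for n
  proof -
    have "(skew p q ^^ (N + k)) (z, w) \<in> W_set q R" for k
    proof (induction k)
      case 0 then show ?case using N by simp
    next
      case (Suc k)
      have "(skew p q ^^ (N + Suc k)) (z, w) = skew p q ((skew p q ^^ (N + k)) (z, w))" by simp
      then show ?case using Suc assms(8) by auto
    qed
    from this[of "n - N"] that show ?thesis by (simp add: skew_iter zn_def wn_def)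
  qed
  define Zb where "Zb = max Z R0"
  have "zn N \<in> escape_set p" using inW[of N] assms(9) by auto
  then have "filterlim (\<lambda>k. norm ((poly p ^^ k) (zn N))) at_top sequentially"
    by (simp add: escape_set_def)
  then have "eventually (\<lambda>k. norm ((poly p ^^ k) (zn N)) \<ge> Zb) sequentially"
    by (simp add: filterlim_at_top)
  then obtain N1 where N1: "\<And>k. k \<ge> N1 \<Longrightarrow> norm ((poly p ^^ k) (zn N)) \<ge> Zb"
    by (auto simp: eventually_sequentially)
  define N0 where "N0 = N + N1"
  have big: "norm (zn n) \<ge> Zb" if "n \<ge> N0" for n
  proof -
    have "(poly p ^^ (n - N)) (zn N) = zn n"
      using that funpow_add[of "n - N" N "poly p"] unfolding zn_def N0_def by (simp add: o_def)
    then show ?thesis using N1[of "n - N"] that by (simp add: N0_def)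
  qed
  have inW0: "(zn n, wn n) \<in> W_set q R" if "n \<ge> N0" for n using inW that by (simp add: N0_def)
  have zpos: "norm (zn n) \<ge> 1" if "n \<ge> N0" for n using big[OF that] R0 by (simp add: Zb_def)
  have zsuc: "zn (Suc n) = poly p (zn n)" for n by (simp add: zn_def)
  have wsuc: "wn (Suc n) = qeval q (zn n) (wn n)" for n by (simp only: wn_def zn_def Qit_Suc')
  define L where "L n = ln (norm (zn n))" for n
  have Lrec: "\<bar>L (Suc n) - real d * L n\<bar> \<le> ln 2" if "n \<ge> N0" for n
    using pb[of "zn n"] big[OF that] by (simp add: L_def zsuc Zb_def)
  define a where "a n = L n / real d ^ n" for n
  have arec: "\<bar>a (Suc n) - a n\<bar> \<le> (ln 2 / real d) * (1 / real d) ^ n" if "n \<ge> N0" for n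
  proof -
    have "a (Suc n) - a n = (L (Suc n) - real d * L n) / real d ^ Suc n"
      using dpos by (simp add: a_def field_simps)
    then have "\<bar>a (Suc n) - a n\<bar> = \<bar>L (Suc n) - real d * L n\<bar> / real d ^ Suc n"
      by simp
    also have "\<dots> \<le> ln 2 / real d ^ Suc n"
      using Lrec[OF that] dpos by (intro divide_right_mono) auto
    also have "\<dots> = (ln 2 / real d) * (1 / real d) ^ n" by (simp add: power_divide field_simps)
    finally show ?thesis .
  qed
  obtain G where aG: "a \<longlonglongrightarrow> G" and atail: "\<And>n. n \<ge> N0 \<Longrightarrow> \<bar>a n - G\<bar> \<le> (ln 2 / real d) * (1 / real d) ^ n / (1 - 1 / real d)"
    using geo_conv[OF r1 r2 _ arec] d2 by auto
  have LG: "\<bar>L n - real d ^ n * G\<bar> \<le> ln 2" if "n \<ge> N0" for n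
  proof -
    have "\<bar>L n - real d ^ n * G\<bar> = real d ^ n * \<bar>a n - G\<bar>"
      using dpos by (simp add: a_def field_simps abs_mult)
    also have "\<dots> \<le> real d ^ n * ((ln 2 / real d) * (1 / real d) ^ n / (1 - 1 / real d))"
      using atail[OF that] dpos by (intro mult_left_mono) auto
    also have "\<dots> = ln 2 / (real d - 1)"
      using d2 by (simp add: power_divide field_simps)
    also have "\<dots> \<le> ln 2" using d2 by (simp add: divide_le_eq)
    finally show ?thesis .
  qed
  have green: "green p z = G"
  proof -
    have "(\<lambda>n. max 0 (ln (norm ((poly p ^^ n) z))) / real (degree p) ^ n) \<longlonglongrightarrow> G"
    proof (rule Lim_transform_eventually[OF aG])
      show "\<forall>\<^sub>F n in sequentially. a n = max 0 (ln (norm ((poly p ^^ n) z))) / real (degree p) ^ n"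
        unfolding eventually_sequentially
        using zpos assms(1) by (intro exI[of _ N0]) (auto simp: a_def L_def zn_def)
    qed
    then show ?thesis unfolding green_def by (rule limI)
  qed
  define lw where "lw n = ln (norm (wn n))" for n
  define K2 where "K2 = \<bar>ln c\<bar> + \<bar>ln C\<bar>"
  have lrec: "\<bar>lw (Suc n) - real d * lw n - real \<gamma> * L n\<bar> \<le> K2" if "n \<ge> N0" for n
  proof -
    have zb: "norm (zn n) \<ge> Z" using big[OF that] by (simp add: Zb_def)
    note k = KE[OF inW0[OF that] zb]
    have wnz: "wn n \<noteq> 0" using k by blast
    have zp: "norm (zn n) > 0" using zpos[OF that] by linarith
    have P: "c * norm (zn n) ^ \<gamma> * norm (wn n) ^ d > 0" using c zp wnz by simp
    have lo: "c * norm (zn n) ^ \<gamma> * norm (wn n) ^ d \<le> norm (wn (Suc n))" using k by (simp add: wsuc)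
    have hi: "norm (wn (Suc n)) \<le> C * norm (zn n) ^ \<gamma> * norm (wn n) ^ d" using k by (simp add: wsuc)
    have Cp: "C > 0"
    proof -
      have "C * (norm (zn n) ^ \<gamma> * norm (wn n) ^ d) > 0" using lo hi P by (simp add: mult_ac)
      moreover have "norm (zn n) ^ \<gamma> * norm (wn n) ^ d > 0" using zp wnz by simp
      ultimately show ?thesis by (simp add: zero_less_mult_iff)
    qed
    have wsp: "norm (wn (Suc n)) > 0" using lo P by linarith
    have e1: "ln (c * norm (zn n) ^ \<gamma> * norm (wn n) ^ d) = ln c + real \<gamma> * L n + real d * lw n"
      using c zp wnz by (simp add: ln_mult ln_realpow L_def lw_def)
    have e2: "ln (C * norm (zn n) ^ \<gamma> * norm (wn n) ^ d) = ln C + real \<gamma> * L n + real d * lw n"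
      using Cp zp wnz by (simp add: ln_mult ln_realpow L_def lw_def)
    have "ln (c * norm (zn n) ^ \<gamma> * norm (wn n) ^ d) \<le> lw (Suc n)"
      unfolding lw_def using lo P by (subst ln_le_cancel_iff) auto
    moreover have "lw (Suc n) \<le> ln (C * norm (zn n) ^ \<gamma> * norm (wn n) ^ d)"
      unfolding lw_def using hi wsp Cp zp wnz by (subst ln_le_cancel_iff) auto
    ultimately show ?thesis using e1 e2 unfolding K2_def by linarith
  qed
  define K3 where "K3 = K2 + real \<gamma> * ln 2"
  define e where "e n = lw n / real d ^ n - real n * real \<gamma> * G / real d" for n
  have erec: "\<bar>e (Suc n) - e n\<bar> \<le> (K3 / real d) * (1 / real d) ^ n" if "n \<ge> N0" for n
  proof -
    have eq: "e (Suc n) - e n = (lw (Suc n) - real d * lw n - real \<gamma> * (real d ^ n * G)) / real d ^ Suc n"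
      using dpos by (simp add: e_def field_simps)
    have "\<bar>lw (Suc n) - real d * lw n - real \<gamma> * (real d ^ n * G)\<bar>
        \<le> \<bar>lw (Suc n) - real d * lw n - real \<gamma> * L n\<bar> + real \<gamma> * \<bar>L n - real d ^ n * G\<bar>"
    proof -
      have "lw (Suc n) - real d * lw n - real \<gamma> * (real d ^ n * G) =
         (lw (Suc n) - real d * lw n - real \<gamma> * L n) + real \<gamma> * (L n - real d ^ n * G)"
        by (simp add: algebra_simps)
      then show ?thesis
        using abs_triangle_ineq[of "lw (Suc n) - real d * lw n - real \<gamma> * L n" "real \<gamma> * (L n - real d ^ n * G)"]
        by (simp add: abs_mult)
    qed
    also have "\<dots> \<le> K3"
      using lrec[OF that] LG[OF that] gpos unfolding K3_def
      by (intro add_mono mult_left_mono) auto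
    finally have "\<bar>e (Suc n) - e n\<bar> \<le> K3 / real d ^ Suc n"
      using eq dpos by (simp add: divide_right_mono)
    also have "\<dots> = (K3 / real d) * (1 / real d) ^ n" by (simp add: power_divide field_simps)
    finally show ?thesis .
  qed
  have K3pos: "K3 \<ge> 0" unfolding K3_def K2_def using gpos by simp
  obtain E where eE: "e \<longlonglongrightarrow> E"
    using geo_conv[OF r1 r2 _ erec] d2 K3pos by auto
  have "(\<lambda>n. (real d / real \<gamma>) * e n * inverse (real n) + G) \<longlonglongrightarrow> (real d / real \<gamma>) * E * 0 + G"
    by (intro tendsto_intros eE lim_inverse_n)
  then have lim: "(\<lambda>n. (real d / real \<gamma>) * e n * inverse (real n) + G) \<longlonglongrightarrow> G" by simp
  show ?thesis unfolding green
  proof (rule Lim_transform_eventually[OF lim])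
    show "\<forall>\<^sub>F n in sequentially. real d / real \<gamma> * e n * inverse (real n) + G =
      ln (norm (Qit p q n z w)) / (real n * real (degree (lead_coeff q)) * real d ^ (n - 1))"
      unfolding eventually_sequentially
    proof (intro exI[of _ 1] allI impI)
      fix n :: nat assume n: "n \<ge> 1"
      obtain m where m: "n = Suc m" using n by (cases n) auto
      have dnp: "real d ^ m > 0" using dpos by simp
      have dn: "real d ^ n = real d * real d ^ m" by (simp add: m)
      have np: "real n > 0" using n by simp
      have nm: "n - 1 = m" using m by simp
      show "real d / real \<gamma> * e n * inverse (real n) + G =
        ln (norm (Qit p q n z w)) / (real n * real (degree (lead_coeff q)) * real d ^ (n - 1))"
        unfolding e_def lw_def wn_def \<gamma>_def[symmetric] dn nm by (rule alg_id[OF dpos gpos np dnp])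
    qed
  qed
qed


end
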